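(* Let $A\subseteq\Delta^{m-1}\times\Delta^{n-1}$, let $\mathscr T$ be a triangulation of $A$, and let $\sigma\in\mathscr T$. Then there exists $\tau\in\mathscr T$ with $\sigma\subseteq\tau$ such that every $f\in\Delta^{n-1}$ which is adjacent in $G(A)$ to some vertex of $G(\sigma)$ is also adjacent in $G(\tau)$ to some vertex of $G(\sigma)$. The same holds with the roles of $\Delta^{m-1}$ and $\Delta^{n-1}$ exchanged (i.e. for $e\in\Delta^{m-1}$ in place of $f$).
   Context: For a finite point set $A\subset\mathbb R^d$: a cell is a subset of $A$; a simplex is an affinely independent cell; a face of a cell $C$ is a subset $F\subseteq C$ which is the set of minimizers on $C$ of some linear functional. A triangulation of $A$ is a collection $\mathscr T$ of simplices of $A$, closed under taking faces, such that for all $\sigma,\sigma'\in\mathscr T$, $\mathrm{conv}(\sigma)\cap\mathrm{conv}(\sigma')=\mathrm{conv}(F)$ for a common face $F$ of $\sigma$ and $\sigma'$, and such that $\bigcup_{\sigma\in\mathscr T}\mathrm{conv}(\sigma)=\mathrm{conv}(A)$. $\Delta^{m-1}=\{e_1,\dots,e_m\}$ and $\Delta^{n-1}=\{f_1,\dots,f_n\}$ are the standard bases of $\mathbb R^m$ and $\mathbb R^n$, and $\Delta^{m-1}\times\Delta^{n-1}:=\{(e_i,f_j)\}\subset\mathbb R^m\times\mathbb R^n$. Let $K$ be the complete bipartite graph on $\Delta^{m-1}\cup\Delta^{n-1}$ with edges $e_if_j$. For $C\subseteq\Delta^{m-1}\times\Delta^{n-1}$, $G(C)$ is the minimal subgraph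 of $K$ with edge set $\{e_if_j:(e_i,f_j)\in C\}$. *)

theory Defs
  imports "HOL-Analysis.Analysis"
begin

text \<open>The vertices e_1..e_m are indexed by
  the finite type 'm, the vertices f_1..f_n by the finite type 'n; the ambient space
  R^m x R^n is real^('m + 'n).  The point (e_i, f_j) is pt (i, j).  Cells are sets of
  index pairs (i, j), identified with the points (e_i, f_j).\<close>

definition pt :: "'m::finite \<times> 'n::finite \<Rightarrow> real^('m + 'n)" where
  "pt p = axis (Inl (fst p)) 1 + axis (Inr (snd p)) 1"

definition is_simplex :: "('m::finite \<times> 'n::finite) set \<Rightarrow> bool" where
  "is_simplex C \<longleftrightarrow> \<not> affine_dependent (pt ` C)"

text \<open>A face of a cell C: the set of minimizers on C of some linear functional
  (every linear functional on real^k is x \<mapsto> c \<bullet> x); the empty face is also admitted.\<close>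
definition is_face :: "('m::finite \<times> 'n::finite) set \<Rightarrow> ('m \<times> 'n) set \<Rightarrow> bool" where
  "is_face F C \<longleftrightarrow> F \<subseteq> C \<and>
     (F = {} \<or> (\<exists>c :: real^('m + 'n).
        F = {x \<in> C. \<forall>y \<in> C. c \<bullet> pt x \<le> c \<bullet> pt y}))"

definition is_triangulation ::
  "('m::finite \<times> 'n::finite) set set \<Rightarrow> ('m \<times> 'n) set \<Rightarrow> bool" where
  "is_triangulation T A \<longleftrightarrow>
     (\<forall>\<sigma>\<in>T. \<sigma> \<subseteq> A \<and> is_simplex \<sigma>) \<and>
     (\<forall>\<sigma>\<in>T. \<forall>F. is_face F \<sigma> \<longrightarrow> F \<in> T) \<and>
     (\<forall>\<sigma>\<in>T. \<forall>\<sigma>'\<in>T. \<exists>F. is_face F \<sigma> \<and> is_face F \<sigma>' \<and>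
        convex hull (pt ` \<sigma>) \<inter> convex hull (pt ` \<sigma>') = convex hull (pt ` F)) \<and>
     (\<Union>\<sigma>\<in>T. convex hull (pt ` \<sigma>)) = convex hull (pt ` A)"

text \<open>The graph G(C): its edges are e_i f_j for (i,j) \<in> C; its vertices are the endpoints
  of these edges.  e-vertices of G(C) / f-vertices of G(C):\<close>
definition G_evertices :: "('m \<times> 'n) set \<Rightarrow> 'm set" where
  "G_evertices C = fst ` C"
definition G_fvertices :: "('m \<times> 'n) set \<Rightarrow> 'n set" where
  "G_fvertices C = snd ` C"
definition G_adj :: "('m \<times> 'n) set \<Rightarrow> 'm \<Rightarrow> 'n \<Rightarrow> bool" where
  "G_adj C i j \<longleftrightarrow> (i, j) \<in> C"

end

theory Submission
  imports Defs
begin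

lemma pt_Inl: "pt p $ Inl i = (if fst p = i then 1 else 0)"
  by (simp add: pt_def axis_def)

lemma pt_Inr: "pt p $ Inr j = (if snd p = j then 1 else 0)"
  by (simp add: pt_def axis_def)

lemma pt_inj: "inj pt"
proof (rule injI)
  fix a b :: "'m::finite \<times> 'n::finite"
  assume "pt a = pt b"
  then have "pt a $ Inl (fst a) = pt b $ Inl (fst a)" "pt a $ Inr (snd a) = pt b $ Inr (snd a)"
    by auto
  then show "a = b" by (simp add: pt_Inl pt_Inr split: if_splits) (metis prod.collapse)
qed

lemma generic:
  fixes A :: "('m::finite \<times> 'n::finite) set"
    and T :: "('m \<times> 'n) set set"
    and Pa :: "'m \<times> 'n \<Rightarrow> 'a" and Pb :: "'m \<times> 'n \<Rightarrow> 'b"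
    and ca :: "'a \<Rightarrow> 'm + 'n" and cb :: "'b \<Rightarrow> 'm + 'n"
  assumes tri: "is_triangulation T A"
    and sT: "\<sigma> \<in> T"
    and h1: "\<And>x k. pt x $ ca k = (if Pa x = k then 1 else 0)"
    and h2: "\<And>x k. pt x $ cb k = (if Pb x = k then 1 else 0)"
  shows "\<exists>\<tau>\<in>T. \<sigma> \<subseteq> \<tau> \<and>
     (\<forall>j. (\<exists>x\<in>A. Pa x \<in> Pa ` \<sigma> \<and> Pb x = j) \<longrightarrow> (\<exists>y\<in>\<tau>. Pa y \<in> Pa ` \<sigma> \<and> Pb y = j))"
proof (cases "\<sigma> = {}")
  case True
  then show ?thesis using sT by auto
next
  case False
  note ne = False
  define I where "I = Pa ` \<sigma>"
  define AI where "AI = {x\<in>A. Pa x \<in> I}"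
  have sA: "\<sigma> \<subseteq> A" and indep: "\<not> affine_dependent (pt ` \<sigma>)"
    using tri sT by (auto simp: is_triangulation_def is_simplex_def)
  have cover: "(\<Union>\<tau>\<in>T. convex hull (pt ` \<tau>)) = convex hull (pt ` A)"
    using tri by (simp add: is_triangulation_def)
  have inter: "\<And>\<tau>. \<tau> \<in> T \<Longrightarrow> \<exists>F. is_face F \<sigma> \<and> is_face F \<tau> \<and>
        convex hull (pt ` \<sigma>) \<inter> convex hull (pt ` \<tau>) = convex hull (pt ` F)"
    using tri sT by (simp add: is_triangulation_def)
  have sAI: "\<sigma> \<subseteq> AI" using sA by (auto simp: AI_def I_def)
  define S where "S = pt ` \<sigma>"
  define Q where "Q = pt ` AI"
  have finS: "finite S" unfolding S_def by simp
  have finQ: "finite Q" unfolding Q_def by simp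
  have neS: "S \<noteq> {}" using ne by (simp add: S_def)
  have neQ: "Q \<noteq> {}" using ne sAI by (auto simp: Q_def)
  have cS: "card S > 0" using finS neS by (simp add: card_gt_0_iff)
  have cQ: "card Q > 0" using finQ neQ by (simp add: card_gt_0_iff)
  define b where "b = (\<Sum>v\<in>S. (1 / real (card S)) *\<^sub>R v)"
  define q where "q = (\<Sum>v\<in>Q. (1 / real (card Q)) *\<^sub>R v)"
  define p where "p = (\<lambda>e::real. (1 - e) *\<^sub>R b + e *\<^sub>R q)"
  have sum1S: "(\<Sum>v\<in>S. 1 / real (card S)) = 1" using cS by simp
  have sum1Q: "(\<Sum>v\<in>Q. 1 / real (card Q)) = 1" using cQ by simp
  have bS: "b \<in> convex hull S"
    unfolding b_def
    by (rule convex_sum[OF finS convex_convex_hull sum1S]) (auto intro: hull_inc)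
  have bri: "b \<in> rel_interior (convex hull S)"
    unfolding rel_interior_convex_hull_explicit[OF indep[folded S_def]]
    using cS sum1S by (auto simp: b_def intro!: exI[of _ "\<lambda>_. 1 / real (card S)"])
  have SA: "S \<subseteq> pt ` A" using sA by (auto simp: S_def)
  have QA: "Q \<subseteq> pt ` A" by (auto simp: Q_def AI_def)
  have bA: "b \<in> convex hull (pt ` A)" using bS hull_mono[OF SA] by blast
  have qA: "q \<in> convex hull (pt ` A)"
    using convex_sum[OF finQ convex_convex_hull sum1Q, of "\<lambda>v. v"] hull_mono[OF QA]
    by (auto simp: q_def intro: hull_inc)
  have pA: "p e \<in> convex hull (pt ` A)" if "0 \<le> e" "e \<le> 1" for e
    unfolding p_def using convexD[OF convex_convex_hull bA qA, of "1 - e" e] that by simp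
  have finT: "finite T" by simp
  define T' where "T' = {\<tau>\<in>T. \<exists>e\<in>{0<..1}. p e \<in> convex hull (pt ` \<tau>)}"
  define K where "K = (\<Union>\<tau>\<in>T'. p -` (convex hull (pt ` \<tau>)))"
  have contp: "continuous (at x) p" for x
    unfolding p_def by (intro continuous_intros)
  have closedK: "closed K"
    unfolding K_def
  proof (intro closed_UN ballI)
    show "finite T'" using finT by (auto simp: T'_def intro: finite_subset)
  next
    fix \<tau> assume "\<tau> \<in> T'"
    show "closed (p -` (convex hull (pt ` \<tau>)))"
      by (rule continuous_closed_vimage[OF _ contp])
        (intro compact_imp_closed compact_convex_hull finite_imp_compact finite_imageI finite)
  qed
  have subK: "{0<..1} \<subseteq> K"
  proof
    fix e :: real assume e: "e \<in> {0<..1}"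
    then have "p e \<in> convex hull (pt ` A)" using pA by auto
    then obtain \<tau> where "\<tau> \<in> T" "p e \<in> convex hull (pt ` \<tau>)" using cover by blast
    then have "\<tau> \<in> T'" using e unfolding T'_def by blast
    then show "e \<in> K" using \<open>p e \<in> convex hull (pt ` \<tau>)\<close> unfolding K_def by blast
  qed
  have "closure {0<..(1::real)} \<subseteq> K" by (rule closure_minimal[OF subK closedK])
  then have "0 \<in> K" by auto
  then obtain \<tau> e where tT: "\<tau> \<in> T" and e: "0 < e" "e \<le> 1"
     and pe: "p e \<in> convex hull (pt ` \<tau>)" and p0: "p 0 \<in> convex hull (pt ` \<tau>)"
    by (auto simp: K_def T'_def)
  have b\<tau>: "b \<in> convex hull (pt ` \<tau>)" using p0 by (simp add: p_def)
  have sub: "\<sigma> \<subseteq> \<tau>"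
  proof
    fix x0 assume x0: "x0 \<in> \<sigma>"
    obtain F where F\<sigma>: "is_face F \<sigma>" and F\<tau>: "is_face F \<tau>" and
      Fi: "convex hull (pt ` \<sigma>) \<inter> convex hull (pt ` \<tau>) = convex hull (pt ` F)"
      using inter[OF tT] by blast
    have Fs: "F \<subseteq> \<sigma>" and Ft: "F \<subseteq> \<tau>" using F\<sigma> F\<tau> by (auto simp: is_face_def)
    have bF: "b \<in> convex hull (pt ` F)" using Fi bS b\<tau> by (auto simp: S_def)
    have face: "convex hull (pt ` F) face_of convex hull S"
      using face_of_convex_hull_affine_independent[OF indep[folded S_def]] Fs
      by (auto simp: S_def intro!: exI[of _ "pt ` F"] image_mono)
    have eq: "convex hull (pt ` F) = convex hull S"
      using face_of_disjoint_rel_interior[OF face] bF bri by blast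
    have "pt x0 extreme_point_of convex hull S"
      using extreme_point_of_convex_hull_affine_independent[OF indep[folded S_def]] x0
      by (simp add: S_def)
    then have "pt x0 \<in> pt ` F" using eq extreme_point_of_convex_hull by metis
    then have "x0 \<in> F" using pt_inj by (auto dest: injD)
    then show "x0 \<in> \<tau>" using Ft by blast
  qed
  have zero1: "p e $ ca k = 0" if "k \<notin> I" for k
  proof -
    have "b $ ca k = 0" unfolding b_def using that
      by (auto simp: S_def I_def h1 intro!: sum.neutral)
    moreover have "q $ ca k = 0" unfolding q_def using that
      by (auto simp: Q_def AI_def h1 intro!: sum.neutral)
    ultimately show ?thesis by (simp add: p_def)
  qed
  have nonneg2: "0 \<le> v $ cb j" if "v \<in> pt ` UNIV" for v j using that by (auto simp: h2)
  have pos2: "p e $ cb j > 0" if "x \<in> AI" "Pb x = j" for x j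
  proof -
    have "b $ cb j \<ge> 0" unfolding b_def
      by (auto simp: S_def h2 intro!: sum_nonneg)
    moreover have "q $ cb j > 0"
    proof -
      have "q $ cb j = (\<Sum>v\<in>Q. (1 / real (card Q)) * v $ cb j)" by (simp add: q_def)
      also have "\<dots> \<ge> (1 / real (card Q)) * pt x $ cb j"
        using that by (intro member_le_sum) (auto simp: Q_def h2)
      finally show ?thesis using that cQ by (simp add: h2) (meson of_nat_0_less_iff order_less_le_trans zero_less_divide_1_iff)
    qed
    ultimately show ?thesis using e by (simp add: p_def add_nonneg_pos)
  qed
  obtain u where u0: "\<forall>v\<in>pt ` \<tau>. 0 \<le> u v" and u1: "sum u (pt ` \<tau>) = 1"
    and usum: "(\<Sum>v\<in>pt ` \<tau>. u v *\<^sub>R v) = p e"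
    using pe by (auto simp: convex_hull_finite)
  have comp: "p e $ k = (\<Sum>v\<in>pt ` \<tau>. u v * v $ k)" for k
    using usum[symmetric] by simp
  show ?thesis
  proof (intro bexI[OF _ tT] conjI sub allI impI)
    fix j assume "\<exists>x\<in>A. Pa x \<in> Pa ` \<sigma> \<and> Pb x = j"
    then obtain x where x: "x \<in> AI" "Pb x = j" by (auto simp: AI_def I_def)
    have "(\<Sum>v\<in>pt ` \<tau>. u v * v $ cb j) \<noteq> 0" using pos2[OF x] comp[of "cb j"] by simp
    then obtain v where v: "v \<in> pt ` \<tau>" "u v * v $ cb j \<noteq> 0"
      by (meson sum.not_neutral_contains_not_neutral)
    then obtain y where y: "y \<in> \<tau>" "v = pt y" by auto
    have Py: "Pb y = j" using v y by (auto simp: h2 split: if_splits)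
    have uv: "u v > 0" using v u0 y Py by (auto simp: h2 order_le_less)
    have "u v * v $ ca (Pa y) \<le> (\<Sum>w\<in>pt ` \<tau>. u w * w $ ca (Pa y))"
      using v u0 by (intro member_le_sum) (auto simp: h1)
    then have "p e $ ca (Pa y) > 0" using uv y comp by (simp add: h1)
    then have "Pa y \<in> I" using zero1 by force
    then show "\<exists>y\<in>\<tau>. Pa y \<in> Pa ` \<sigma> \<and> Pb y = j" using y Py by (auto simp: I_def)
  qed
qed

theorem proposition6p2:
  fixes A :: "('m::finite \<times> 'n::finite) set"
    and T :: "('m \<times> 'n) set set"
  assumes "is_triangulation T A"
    and "\<sigma> \<in> T"
  shows "(\<exists>\<tau>\<in>T. \<sigma> \<subseteq> \<tau> \<and>
            (\<forall>j. (\<exists>i\<in>G_evertices \<sigma>. G_adj A i j) \<longrightarrow> (\<exists>i\<in>G_evertices \<sigma>. G_adj \<tau> i j)))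
       \<and> (\<exists>\<tau>\<in>T. \<sigma> \<subseteq> \<tau> \<and>
            (\<forall>i. (\<exists>j\<in>G_fvertices \<sigma>. G_adj A i j) \<longrightarrow> (\<exists>j\<in>G_fvertices \<sigma>. G_adj \<tau> i j)))"
proof
  obtain \<tau> where t: "\<tau> \<in> T" "\<sigma> \<subseteq> \<tau>" and
    H: "\<forall>j. (\<exists>x\<in>A. fst x \<in> fst ` \<sigma> \<and> snd x = j) \<longrightarrow> (\<exists>y\<in>\<tau>. fst y \<in> fst ` \<sigma> \<and> snd y = j)"
    using generic[where Pa=fst and Pb=snd and ca=Inl and cb=Inr, OF assms] by (auto simp: pt_Inl pt_Inr)
  show "\<exists>\<tau>\<in>T. \<sigma> \<subseteq> \<tau> \<and>
            (\<forall>j. (\<exists>i\<in>G_evertices \<sigma>. G_adj A i j) \<longrightarrow> (\<exists>i\<in>G_evertices \<sigma>. G_adj \<tau> i j))"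
  proof (intro bexI[OF _ t(1)] conjI t(2) allI impI)
    fix j assume "\<exists>i\<in>G_evertices \<sigma>. G_adj A i j"
    then have "\<exists>x\<in>A. fst x \<in> fst ` \<sigma> \<and> snd x = j" unfolding G_evertices_def G_adj_def by (metis fst_conv snd_conv)
    then obtain y where "y \<in> \<tau>" "fst y \<in> fst ` \<sigma>" "snd y = j" using H by blast
    then show "\<exists>i\<in>G_evertices \<sigma>. G_adj \<tau> i j"
      unfolding G_evertices_def G_adj_def by (metis prod.collapse)
  qed
next
  obtain \<tau> where t: "\<tau> \<in> T" "\<sigma> \<subseteq> \<tau>" and
    H: "\<forall>j. (\<exists>x\<in>A. snd x \<in> snd ` \<sigma> \<and> fst x = j) \<longrightarrow> (\<exists>y\<in>\<tau>. snd y \<in> snd ` \<sigma> \<and> fst y = j)"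
    using generic[where Pa=snd and Pb=fst and ca=Inr and cb=Inl, OF assms] by (auto simp: pt_Inl pt_Inr)
  show "\<exists>\<tau>\<in>T. \<sigma> \<subseteq> \<tau> \<and>
            (\<forall>i. (\<exists>j\<in>G_fvertices \<sigma>. G_adj A i j) \<longrightarrow> (\<exists>j\<in>G_fvertices \<sigma>. G_adj \<tau> i j))"
  proof (intro bexI[OF _ t(1)] conjI t(2) allI impI)
    fix i assume "\<exists>j\<in>G_fvertices \<sigma>. G_adj A i j"
    then have "\<exists>x\<in>A. snd x \<in> snd ` \<sigma> \<and> fst x = i" unfolding G_fvertices_def G_adj_def by (metis fst_conv snd_conv)
    then obtain y where "y \<in> \<tau>" "snd y \<in> snd ` \<sigma>" "fst y = i" using H by blast
    then show "\<exists>j\<in>G_fvertices \<sigma>. G_adj \<tau> i j"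
      unfolding G_fvertices_def G_adj_def by (metis prod.collapse)
  qed
qed

end
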